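(* There is a numerical constant $C>0$ such that the following holds. Let $\delta\in[0,1]$, $h\in(0,1/2]$ with $h\le\delta$, $(u,w)\in\mathcal A_\delta$, $E_h=E_h(u,w)$, and assume $w'(r)\in(-\frac32,-\frac12)$ for all $r\in[\frac\delta8,1]$. Then \[ \min\Big\{\frac1{\delta^2\log\frac1h},1\Big\}\le C\,E_h . \]
   Context: Let $B_1=\{x\in\mathbb R^2:|x|<1\}$. For scalar functions $u,w$ on $(0,1)$ define $U(x)=\frac12(u(|x|)-|x|)\frac{x}{|x|}$ and $W(x)=w(|x|)$. For $\delta\in[0,1]$ let $\mathcal A_\delta$ be the set of pairs $(u,w)$ with $(U,W)\in W^{1,2}(B_1;\mathbb R^2)\times W^{2,2}(B_1)$, $w(0)=0$, $w(1)=1-\delta$. For $h>0$, \[ E_h(u,w)=\int_0^1\frac{u^2}{r}+r(u'+w'^2-1)^2+h^2\Big(rw''^2+\frac{w'^2}{r}\Big)dr . \] For $(u,w)\in\mathcal A_\delta$, $w'$ denotes its continuous representative on $(0,1]$. *)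

theory Defs
  imports "HOL-Analysis.Analysis"
begin

fun iter_pd :: "'a::euclidean_space list \<Rightarrow> ('a \<Rightarrow> real) \<Rightarrow> 'a \<Rightarrow> real" where
  "iter_pd [] f = f"
| "iter_pd (b # bs) f = (\<lambda>x. frechet_derivative (iter_pd bs f) (at x) b)"

definition smooth_fn :: "('a::euclidean_space \<Rightarrow> real) \<Rightarrow> bool" where
  "smooth_fn f \<longleftrightarrow> (\<forall>bs. set bs \<subseteq> Basis \<longrightarrow>
      continuous_on UNIV (iter_pd bs f) \<and> (\<forall>x. iter_pd bs f differentiable (at x)))"

definition test_fn :: "'a::euclidean_space set \<Rightarrow> ('a \<Rightarrow> real) \<Rightarrow> bool" where
  "test_fn S \<phi> \<longleftrightarrow> smooth_fn \<phi> \<and> compact (closure {x. \<phi> x \<noteq> 0})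
      \<and> closure {x. \<phi> x \<noteq> 0} \<subseteq> S"

definition L2_on :: "'a::euclidean_space set \<Rightarrow> ('a \<Rightarrow> real) \<Rightarrow> bool" where
  "L2_on S f \<longleftrightarrow> f \<in> borel_measurable (lebesgue_on S) \<and> integrable (lebesgue_on S) (\<lambda>x. (f x)\<^sup>2)"

definition loc_integrable_on :: "'a::euclidean_space set \<Rightarrow> ('a \<Rightarrow> real) \<Rightarrow> bool" where
  "loc_integrable_on S f \<longleftrightarrow> (\<forall>K. compact K \<and> K \<subseteq> S \<longrightarrow> set_integrable lebesgue K f)"

definition weak_partial :: "'a::euclidean_space set \<Rightarrow> ('a \<Rightarrow> real) \<Rightarrow> 'a \<Rightarrow> ('a \<Rightarrow> real) \<Rightarrow> bool" where
  "weak_partial S f b g \<longleftrightarrow> loc_integrable_on S f \<and> loc_integrable_on S g \<and>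
     (\<forall>\<phi>. test_fn S \<phi> \<longrightarrow>
        (LINT x : S | lebesgue. f x * frechet_derivative \<phi> (at x) b)
          = - (LINT x : S | lebesgue. g x * \<phi> x))"

definition W12_on :: "'a::euclidean_space set \<Rightarrow> ('a \<Rightarrow> real) \<Rightarrow> bool" where
  "W12_on S f \<longleftrightarrow> L2_on S f \<and> (\<forall>b\<in>Basis. \<exists>g. L2_on S g \<and> weak_partial S f b g)"

definition W22_on :: "'a::euclidean_space set \<Rightarrow> ('a \<Rightarrow> real) \<Rightarrow> bool" where
  "W22_on S f \<longleftrightarrow> L2_on S f \<and> (\<forall>b\<in>Basis. \<exists>g. W12_on S g \<and> weak_partial S f b g)"

definition W12_vec_on :: "'a::euclidean_space set \<Rightarrow> ('a \<Rightarrow> 'b::euclidean_space) \<Rightarrow> bool" where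
  "W12_vec_on S F \<longleftrightarrow> (\<forall>c\<in>Basis. W12_on S (\<lambda>x. F x \<bullet> c))"

definition U_field :: "(real \<Rightarrow> real) \<Rightarrow> real^2 \<Rightarrow> real^2" where
  "U_field u x = ((u (norm x) - norm x) / 2) *\<^sub>R (x /\<^sub>R norm x)"

definition W_field :: "(real \<Rightarrow> real) \<Rightarrow> real^2 \<Rightarrow> real" where
  "W_field w x = w (norm x)"

text \<open>The class A_delta. Point values w(0), w(1) refer to the continuous representative
  of w on [0,1]; we require the given w to be that representative.\<close>
definition A_adm :: "real \<Rightarrow> ((real \<Rightarrow> real) \<times> (real \<Rightarrow> real)) set" where
  "A_adm \<delta> = {(u, w). W12_vec_on (ball 0 1) (U_field u) \<and> W22_on (ball 0 1) (W_field w)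
      \<and> continuous_on {0..1} w \<and> w 0 = 0 \<and> w 1 = 1 - \<delta>}"

text \<open>The energy, with du = u', dw = w', ddw = w'' supplied explicitly (possibly infinite).\<close>
definition E_energy :: "real \<Rightarrow> (real \<Rightarrow> real) \<Rightarrow> (real \<Rightarrow> real) \<Rightarrow> (real \<Rightarrow> real) \<Rightarrow> (real \<Rightarrow> real) \<Rightarrow> ennreal" where
  "E_energy h u du dw ddw = (\<integral>\<^sup>+ r \<in> {0<..<1}.
      ennreal ((u r)\<^sup>2 / r + r * (du r + (dw r)\<^sup>2 - 1)\<^sup>2
               + h\<^sup>2 * (r * (ddw r)\<^sup>2 + (dw r)\<^sup>2 / r)) \<partial>lborel)"

end

theory Submission
  imports Defs
begin

fun Cn :: "nat \<Rightarrow> (real \<Rightarrow> real) \<Rightarrow> bool" where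
  "Cn 0 f = True"
| "Cn (Suc n) f = ((\<forall>x. f differentiable (at x)) \<and> Cn n (deriv f))"

lemma Cn_Suc_D: "Cn (Suc n) f \<Longrightarrow> Cn n f"
  by (induction n arbitrary: f) auto

lemma Cn_mono: "Cn n f \<Longrightarrow> m \<le> n \<Longrightarrow> Cn m f"
proof (induction n)
  case (Suc n) then show ?case using Cn_Suc_D by (metis le_Suc_eq)
qed simp

lemma deriv_eqI: "(\<And>x. (f has_real_derivative g x) (at x)) \<Longrightarrow> deriv f = g"
  using DERIV_imp_deriv by blast

lemma CnI: assumes "\<And>x. (f has_real_derivative g x) (at x)" "Cn n g"
  shows "Cn (Suc n) f"
  using assms deriv_eqI[of f g] real_differentiable_def by auto

lemma Cn_D: assumes "Cn (Suc n) f" shows "(f has_real_derivative deriv f x) (at x)"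
  using assms DERIV_deriv_iff_real_differentiable by auto

lemma Cn_const: "Cn n (\<lambda>x. c)"
proof (induction n arbitrary: c)
  case (Suc n) then show ?case by (intro CnI[where g="\<lambda>x. 0"]) auto
qed simp

lemma Cn_add: "Cn n f \<Longrightarrow> Cn n g \<Longrightarrow> Cn n (\<lambda>x. f x + g x)"
proof (induction n arbitrary: f g)
  case (Suc n)
  show ?case
    apply (rule CnI[where g="\<lambda>x. deriv f x + deriv g x"])
    using Suc by (auto intro!: derivative_eq_intros Cn_D)
qed simp

lemma Cn_mult: "Cn n f \<Longrightarrow> Cn n g \<Longrightarrow> Cn n (\<lambda>x. f x * g x)"
proof (induction n arbitrary: f g)
  case (Suc n)
  have fg: "Cn n f" "Cn n g" using Suc.prems Cn_Suc_D by blast+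
  have "Cn n (\<lambda>x. deriv f x * g x + f x * deriv g x)"
    using Suc fg by (intro Cn_add Suc.IH) (auto dest: Cn_Suc_D)
  then show ?case
    apply (intro CnI[where g="\<lambda>x. deriv f x * g x + f x * deriv g x"])
    using Suc by (auto intro!: derivative_eq_intros Cn_D)
qed simp

lemma Cn_comp: "Cn n h \<Longrightarrow> Cn n f \<Longrightarrow> Cn n (\<lambda>x. h (f x))"
proof (induction n arbitrary: f h)
  case (Suc n)
  have ff: "Cn n f" using Suc.prems Cn_Suc_D by blast
  have "Cn n (\<lambda>x. deriv h (f x) * deriv f x)"
    using Suc.prems ff by (intro Cn_mult[OF Suc.IH[of "deriv h" f]]) auto
  then show ?case
    apply (intro CnI[where g="\<lambda>x. deriv h (f x) * deriv f x"])
    using Suc.prems by (auto intro!: DERIV_chain2[where f=h, OF Cn_D Cn_D])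
qed simp

lemma Cn_id: "Cn n (\<lambda>x. x)"
proof (cases n)
  case (Suc m) then show ?thesis using CnI[where g="\<lambda>x. 1" and f="\<lambda>x. x" and n=m] by (auto intro: Cn_const)
qed simp

lemma Cn_inverse: "Cn n g \<Longrightarrow> (\<And>x. g x \<noteq> 0) \<Longrightarrow> Cn n (\<lambda>x. 1 / g x)"
proof (induction n arbitrary: g)
  case (Suc n)
  have gg: "Cn n g" using Suc.prems Cn_Suc_D by blast
  have "Cn n (\<lambda>x. (-1) * deriv g x * ((1 / g x) * (1 / g x)))"
    using Suc gg by (intro Cn_mult Cn_const Suc.IH) (auto dest: Cn_Suc_D)
  then show ?case
    apply (intro CnI[where g="\<lambda>x. (-1) * deriv g x * ((1 / g x) * (1 / g x))"])
    using Suc by (auto intro!: derivative_eq_intros Cn_D simp: power2_eq_square)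
qed simp

definition psi :: "nat \<Rightarrow> real \<Rightarrow> real" where
  "psi k x = (if x > 0 then (1/x)^k * exp (-1/x) else 0)"

lemma psi_lim0: "((\<lambda>x. (1/x)^k * exp (-1/x)) \<longlongrightarrow> 0) (at_right (0::real))"
proof -
  have "((\<lambda>y. y^k / exp y) \<longlongrightarrow> (0::real)) at_top" by (rule tendsto_power_div_exp_0)
  then have "((\<lambda>x. (inverse x)^k / exp (inverse x)) \<longlongrightarrow> (0::real)) (at_right 0)"
    using filterlim_compose[OF _ filterlim_inverse_at_top_right] by blast
  then show ?thesis by (simp add: exp_minus field_simps inverse_eq_divide)
qed

lemma psi_deriv_pos:
  assumes "x > 0"
  shows "(psi k has_real_derivative (- real k * psi (k+1) x + psi (k+2) x)) (at x)"
proof -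
  have "((\<lambda>x. (1/x)^k * exp (-1/x)) has_real_derivative (- real k * psi (k+1) x + psi (k+2) x)) (at x)"
    using assms
    apply (auto intro!: derivative_eq_intros simp: psi_def)
    apply (simp add: field_simps power2_eq_square)
    by (cases k) auto
  then show ?thesis
    apply (rule has_field_derivative_transform_within_open[where S="{0<..}"])
    using assms by (auto simp: psi_def)
qed

lemma psi_deriv_neg:
  assumes "x < 0"
  shows "(psi k has_real_derivative (- real k * psi (k+1) x + psi (k+2) x)) (at x)"
proof -
  have "((\<lambda>x. 0) has_real_derivative 0) (at x)" by simp
  then have "(psi k has_real_derivative 0) (at x)"
    apply (rule has_field_derivative_transform_within_open[where S="{..<0}"])
    using assms by (auto simp: psi_def)
  then show ?thesis using assms by (simp add: psi_def)
qed

lemma psi_deriv_0: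
  shows "(psi k has_real_derivative 0) (at 0)"
  unfolding has_field_derivative_iff
proof (rule filterlim_split_at)
  show "((\<lambda>y. (psi k y - psi k 0) / (y - 0)) \<longlongrightarrow> 0) (at_left 0)"
  proof (rule tendsto_eventually)
    show "\<forall>\<^sub>F y in at_left 0. (psi k y - psi k 0) / (y - 0) = 0"
      unfolding eventually_at_left_field psi_def by (intro exI[of _ "-1"]) auto
  qed
  have "((\<lambda>x. (1/x)^(k+1) * exp (-1/x)) \<longlongrightarrow> 0) (at_right (0::real))" by (rule psi_lim0)
  then show "((\<lambda>y. (psi k y - psi k 0) / (y - 0)) \<longlongrightarrow> 0) (at_right 0)"
    apply (rule tendsto_cong[THEN iffD1, rotated])
    unfolding eventually_at_right_field psi_def by (intro exI[of _ 1]) (auto simp: field_simps)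
qed

lemma psi_deriv:
  shows "(psi k has_real_derivative (- real k * psi (k+1) x + psi (k+2) x)) (at x)"
proof -
  consider "x < 0" | "x = 0" | "x > 0" by linarith
  then show ?thesis
  proof cases
    case 2 then show ?thesis using psi_deriv_0[of k] by (simp add: psi_def)
  qed (use psi_deriv_pos psi_deriv_neg in auto)
qed

lemma Cn_psi: "Cn n (psi k)"
proof (induction n arbitrary: k)
  case (Suc n)
  show ?case
    by (rule CnI[OF psi_deriv]) (intro Cn_add Cn_mult Cn_const Suc.IH)
qed simp

lemma psi_nonneg: "psi k x \<ge> 0" by (simp add: psi_def)
lemma psi_pos: "x > 0 \<Longrightarrow> psi 0 x > 0" by (simp add: psi_def)
lemma psi_zero: "x \<le> 0 \<Longrightarrow> psi k x = 0" by (simp add: psi_def)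

definition S :: "real \<Rightarrow> real" where
  "S x = psi 0 x * (1 / (psi 0 x + psi 0 (1 - x)))"

lemma den_pos: "psi 0 x + psi 0 (1 - x) > 0"
proof (cases "x > 0")
  case True then show ?thesis using psi_pos[of x] psi_nonneg[of 0 "1-x"] by linarith
next
  case False then show ?thesis using psi_pos[of "1-x"] psi_nonneg[of 0 x] by linarith
qed

lemma Cn_S: "Cn n S"
proof -
  have "Cn n (\<lambda>x. psi 0 x * (1 / (psi 0 x + psi 0 (1 - x))))"
    apply (intro Cn_mult Cn_inverse Cn_add Cn_psi)
     apply (rule Cn_comp[where h="psi 0" and f="\<lambda>x. 1 - x", OF Cn_psi])
    apply (rule Cn_add[where f="\<lambda>x. 1" and g="\<lambda>x. (-1) * x", simplified, OF Cn_const])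
    apply (rule Cn_mult[where f="\<lambda>x. -1", OF Cn_const Cn_id, simplified])
    using den_pos by (metis less_irrefl)
  then show ?thesis unfolding S_def[abs_def] .
qed

lemma S_le0: "x \<le> 0 \<Longrightarrow> S x = 0" by (simp add: S_def psi_zero)
lemma S_ge1: "x \<ge> 1 \<Longrightarrow> S x = 1"
  using den_pos[of x] by (simp add: S_def psi_zero)
lemma S_nonneg: "S x \<ge> 0" using den_pos[of x] psi_nonneg[of 0 x] by (simp add: S_def)
lemma S_le1: "S x \<le> 1" using den_pos[of x] psi_nonneg[of 0 x] psi_nonneg[of 0 "1-x"]
  by (simp add: S_def divide_simps)

lemma S_deriv: "(S has_real_derivative deriv S x) (at x)"
  using Cn_D[of 0 S] Cn_S by blast

lemma Cn_deriv: "(\<And>n. Cn n f) \<Longrightarrow> Cn n (deriv f)"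
  using Cn.simps(2) by blast

lemma contS': "continuous_on UNIV (deriv S)"
proof -
  have "\<forall>x. deriv S differentiable (at x)" using Cn_S[of 2] by (simp add: numeral_2_eq_2)
  then show ?thesis by (meson continuous_at_imp_continuous_on differentiable_imp_continuous_within)
qed

lemma S'_out: assumes "x \<le> 0 \<or> x \<ge> 1" shows "deriv S x = 0"
  using assms
proof
  assume "x \<le> 0"
  show ?thesis
    by (rule DERIV_local_min[OF S_deriv, of 1]) (use \<open>x \<le> 0\<close> S_le0 S_nonneg in auto)
next
  assume "x \<ge> 1"
  show ?thesis
    by (rule DERIV_local_max[OF S_deriv, of 1]) (use \<open>x \<ge> 1\<close> S_ge1 S_le1 in auto)
qed

lemma S'_bound: obtains K where "K > 0" "\<And>x. \<bar>deriv S x\<bar> \<le> K"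
proof -
  have "compact (deriv S ` {0..1})"
    by (rule compact_continuous_image) (use contS' continuous_on_subset in auto)
  then have "bounded (deriv S ` {0..1})" by (rule compact_imp_bounded)
  then obtain K where K: "K > 0" "\<And>x. x \<in> {0..1} \<Longrightarrow> norm (deriv S x) \<le> K"
    using bounded_pos by (metis image_eqI)
  have "\<bar>deriv S x\<bar> \<le> K" for x
  proof (cases "x \<in> {0..1}")
    case True then show ?thesis using K by auto
  next
    case False then show ?thesis using S'_out[of x] K by auto
  qed
  then show ?thesis using K that by blast
qed

lemma frechet_1:
  fixes g :: "real \<Rightarrow> real"
  assumes "g differentiable (at x)" shows "frechet_derivative g (at x) 1 = deriv g x"
proof -
  have "(g has_real_derivative deriv g x) (at x)"
    using assms DERIV_deriv_iff_real_differentiable by blast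
  then have "(g has_derivative (*) (deriv g x)) (at x)"
    by (simp add: has_field_derivative_def)
  then show ?thesis using frechet_derivative_at by (metis mult.right_neutral)
qed

lemma Cn_funpow: "Cn (Suc k) f \<Longrightarrow> (deriv ^^ k) f differentiable (at x)"
proof (induction k arbitrary: f)
  case 0 then show ?case by simp
next
  case (Suc k)
  have "Cn (Suc k) (deriv f)" using Suc.prems by simp
  then show ?case using Suc.IH by (simp add: funpow_Suc_right del: funpow.simps)
qed

lemma iter_pd_eq:
  fixes f :: "real \<Rightarrow> real"
  assumes "\<And>n. Cn n f" "set bs \<subseteq> Basis"
  shows "iter_pd bs f = (deriv ^^ length bs) f"
  using assms(2)
proof (induction bs)
  case (Cons b bs)
  then have b: "b = 1" "iter_pd bs f = (deriv ^^ length bs) f" by auto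
  show ?case
    by (simp only: iter_pd.simps b list.size funpow.simps o_apply frechet_1[OF Cn_funpow[OF assms(1)]] add_Suc_right add_0_right)
qed simp

lemma smooth_of_Cn:
  fixes f :: "real \<Rightarrow> real"
  assumes "\<And>n. Cn n f" shows "smooth_fn f"
  unfolding smooth_fn_def
proof (intro allI impI)
  fix bs :: "real list" assume bs: "set bs \<subseteq> Basis"
  have d: "\<And>x. iter_pd bs f differentiable (at x)"
    using iter_pd_eq[OF assms bs] Cn_funpow[OF assms] by simp
  then show "continuous_on UNIV (iter_pd bs f) \<and> (\<forall>x. iter_pd bs f differentiable (at x))"
    by (meson continuous_at_imp_continuous_on differentiable_imp_continuous_within)
qed

definition phi :: "real \<Rightarrow> real \<Rightarrow> real \<Rightarrow> real \<Rightarrow> real \<Rightarrow> real" where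
  "phi p q P Q x = S ((x - p) / q) - S ((x - P) / Q)"

definition dphi :: "real \<Rightarrow> real \<Rightarrow> real \<Rightarrow> real \<Rightarrow> real \<Rightarrow> real" where
  "dphi p q P Q x = deriv S ((x - p) / q) / q - deriv S ((x - P) / Q) / Q"

lemma Cn_affine: "Cn n (\<lambda>x. a * x + b)"
  by (intro Cn_add Cn_mult Cn_const Cn_id)

lemma Cn_Saff: "Cn n (\<lambda>x. S ((x - p) / q))"
proof -
  have "Cn n (\<lambda>x. S ((1/q) * x + (- p / q)))" by (rule Cn_comp[OF Cn_S Cn_affine])
  moreover have "(\<lambda>x. S ((1/q) * x + (- p / q))) = (\<lambda>x. S ((x - p) / q))"
    by (simp add: fun_eq_iff diff_divide_distrib)
  ultimately show ?thesis by simp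
qed

lemma Cn_phi: "Cn n (phi p q P Q)"
proof -
  have "Cn n (\<lambda>x. S ((x - p) / q) + (-1) * S ((x - P) / Q))"
    by (intro Cn_add Cn_mult Cn_const Cn_Saff)
  then show ?thesis unfolding phi_def[abs_def] by simp
qed

lemma phi_deriv: "q \<noteq> 0 \<Longrightarrow> Q \<noteq> 0 \<Longrightarrow> (phi p q P Q has_real_derivative dphi p q P Q x) (at x)"
  unfolding phi_def[abs_def] dphi_def
  by (auto intro!: derivative_eq_intros DERIV_chain2[OF S_deriv])

lemma continuous_dphi: "q \<noteq> 0 \<Longrightarrow> Q \<noteq> 0 \<Longrightarrow> continuous_on A (dphi p q P Q)"
  unfolding dphi_def
  by (intro continuous_intros continuous_on_compose2[OF contS']) auto

context
  fixes p q P Q :: real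
  assumes pq: "0 < q" "0 < Q" "p + q \<le> P"
begin

lemma phi_out: "x \<le> p \<or> x \<ge> P + Q \<Longrightarrow> phi p q P Q x = 0"
  using pq by (auto simp: phi_def S_le0 S_ge1 divide_simps)

lemma dphi_out: "x \<le> p \<or> x \<ge> P + Q \<Longrightarrow> dphi p q P Q x = 0"
  using pq by (auto simp: dphi_def S'_out divide_simps)

lemma phi_one: "p + q \<le> x \<Longrightarrow> x \<le> P \<Longrightarrow> phi p q P Q x = 1"
  using pq by (auto simp: phi_def S_le0 S_ge1 divide_simps)

lemma phi_nonneg: "phi p q P Q x \<ge> 0"
proof (cases "x \<le> P")
  case True then show ?thesis using pq S_nonneg by (auto simp: phi_def S_le0 divide_simps)
next
  case False then have "x \<ge> p + q" using pq by auto
  then show ?thesis using pq S_le1 by (auto simp: phi_def S_ge1 divide_simps)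
qed

lemma phi_le1: "phi p q P Q x \<le> 1"
  using S_nonneg S_le1 by (auto simp: phi_def) (smt (verit) S_le1 S_nonneg)

lemma test_phi: "0 < p \<Longrightarrow> P + Q < 1 \<Longrightarrow> test_fn {0<..<1} (phi p q P Q)"
  unfolding test_fn_def
proof (intro conjI)
  assume "0 < p" "P + Q < 1"
  show "smooth_fn (phi p q P Q)" by (rule smooth_of_Cn[OF Cn_phi])
  have "{x. phi p q P Q x \<noteq> 0} \<subseteq> {p..P+Q}"
  proof
    fix x assume "x \<in> {x. phi p q P Q x \<noteq> 0}"
    then show "x \<in> {p..P+Q}" using phi_out[of x] by force
  qed
  then have c: "closure {x. phi p q P Q x \<noteq> 0} \<subseteq> {p..P+Q}"
    by (rule closure_minimal) auto
  then show "compact (closure {x. phi p q P Q x \<noteq> 0})"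
    by (metis closed_closure compact_Icc compact_Int_closed inf.absorb_iff2)
  show "closure {x. phi p q P Q x \<noteq> 0} \<subseteq> {0<..<1}"
    using c \<open>0 < p\<close> \<open>P + Q < 1\<close> by auto
qed

end

lemma LINT_restrict:
  assumes "A \<subseteq> B" "\<And>x. x \<in> B - A \<Longrightarrow> f x = 0"
  shows "(LINT x:B|M. f x) = (LINT x:A|M. (f x :: real))"
proof -
  have "(\<lambda>x. indicator B x *\<^sub>R f x) = (\<lambda>x. indicator A x *\<^sub>R f x)"
    using assms by (auto simp: fun_eq_iff indicator_def)
  then show ?thesis by (simp add: set_lebesgue_integral_def)
qed

lemma frechet_phi: "0 < q \<Longrightarrow> 0 < Q \<Longrightarrow> frechet_derivative (phi p q P Q) (at x) 1 = dphi p q P Q x"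
proof -
  assume "0 < q" "0 < Q"
  then have "(phi p q P Q has_derivative (*) (dphi p q P Q x)) (at x)"
    using phi_deriv[of q Q p P x] by (simp add: has_field_derivative_def)
  then show ?thesis using frechet_derivative_at by (metis mult.right_neutral)
qed

lemma abs_int_prod_cont:
  fixes f g :: "real \<Rightarrow> real"
  assumes "continuous_on {a..b} g" "f absolutely_integrable_on {a..b}"
  shows "(\<lambda>x. f x * g x) absolutely_integrable_on {a..b}"
proof -
  have "(\<lambda>x. g x * f x) absolutely_integrable_on {a..b}"
  proof (rule absolutely_integrable_bounded_measurable_product_real)
    show "g \<in> borel_measurable (lebesgue_on {a..b})"
      using assms(1) by (intro continuous_imp_measurable_on_sets_lebesgue) auto
    show "bounded (g ` {a..b})"
      using assms(1) by (intro compact_imp_bounded compact_continuous_image) auto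
  qed (use assms in auto)
  then show ?thesis by (simp add: mult.commute)
qed

context
  fixes p q P Q :: real
  assumes pq: "0 < q" "0 < Q" "p + q \<le> P" "0 < p" "P + Q < 1"
begin

lemma loc_int_K:
  assumes "loc_integrable_on {0<..<1} f"
  shows "f absolutely_integrable_on {p..P+Q}"
proof -
  have "{p..P+Q} \<subseteq> {0<..<1}" using pq by auto
  then show ?thesis using assms unfolding loc_integrable_on_def by (meson compact_Icc)
qed

lemma weak_phi:
  assumes wp: "weak_partial {0<..<1} f 1 g"
  shows "(\<lambda>x. f x * dphi p q P Q x) absolutely_integrable_on {p..P+Q}"
    "(\<lambda>x. g x * phi p q P Q x) absolutely_integrable_on {p..P+Q}"
    "integral {p..P+Q} (\<lambda>x. f x * dphi p q P Q x) = - integral {p..P+Q} (\<lambda>x. g x * phi p q P Q x)"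
proof -
  have lf: "loc_integrable_on {0<..<1} f" and lg: "loc_integrable_on {0<..<1} g"
   and eq: "(LINT x : {0<..<1} | lebesgue. f x * frechet_derivative (phi p q P Q) (at x) 1)
          = - (LINT x : {0<..<1} | lebesgue. g x * phi p q P Q x)"
    using wp test_phi[OF pq] unfolding weak_partial_def by auto
  show a1: "(\<lambda>x. f x * dphi p q P Q x) absolutely_integrable_on {p..P+Q}"
    by (rule abs_int_prod_cont[OF continuous_dphi loc_int_K[OF lf]]) (use pq in auto)
  have "continuous_on {p..P+Q} (phi p q P Q)"
    using phi_deriv[of q Q p P] pq(1,2)
    by (intro continuous_at_imp_continuous_on) (auto intro: DERIV_isCont)
  then show a2: "(\<lambda>x. g x * phi p q P Q x) absolutely_integrable_on {p..P+Q}"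
    by (rule abs_int_prod_cont[OF _ loc_int_K[OF lg]])
  have sub: "{p..P+Q} \<subseteq> {0<..<1}" using pq by auto
  have "(LINT x : {0<..<1} | lebesgue. f x * frechet_derivative (phi p q P Q) (at x) 1)
      = (LINT x : {0<..<1} | lebesgue. f x * dphi p q P Q x)"
    using frechet_phi[OF pq(1,2)] by simp
  also have "\<dots> = (LINT x : {p..P+Q} | lebesgue. f x * dphi p q P Q x)"
    by (rule LINT_restrict[OF sub]) (use dphi_out[OF pq(1-3)] in auto)
  also have "\<dots> = integral {p..P+Q} (\<lambda>x. f x * dphi p q P Q x)"
    by (rule set_lebesgue_integral_eq_integral(2)[OF a1])
  finally have 1: "(LINT x : {0<..<1} | lebesgue. f x * frechet_derivative (phi p q P Q) (at x) 1)
     = integral {p..P+Q} (\<lambda>x. f x * dphi p q P Q x)" .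
  have "(LINT x : {0<..<1} | lebesgue. g x * phi p q P Q x)
      = (LINT x : {p..P+Q} | lebesgue. g x * phi p q P Q x)"
    by (rule LINT_restrict[OF sub]) (use phi_out[OF pq(1-3)] in auto)
  also have "\<dots> = integral {p..P+Q} (\<lambda>x. g x * phi p q P Q x)"
    by (rule set_lebesgue_integral_eq_integral(2)[OF a2])
  finally show "integral {p..P+Q} (\<lambda>x. f x * dphi p q P Q x) = - integral {p..P+Q} (\<lambda>x. g x * phi p q P Q x)"
    using eq 1 by simp
qed

end

definition KS :: real where "KS = (SOME K. K > 0 \<and> (\<forall>x. \<bar>deriv S x\<bar> \<le> K))"

lemma KS: "KS > 0" "\<bar>deriv S x\<bar> \<le> KS"
proof -
  have "\<exists>K. K > 0 \<and> (\<forall>x. \<bar>deriv S x\<bar> \<le> K)" using S'_bound by metis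
  then have "KS > 0 \<and> (\<forall>x. \<bar>deriv S x\<bar> \<le> KS)" unfolding KS_def by (rule someI_ex)
  then show "KS > 0" "\<bar>deriv S x\<bar> \<le> KS" by auto
qed

lemma S_aff_deriv: "e \<noteq> 0 \<Longrightarrow> ((\<lambda>x. S ((x - c) / e)) has_real_derivative deriv S ((x - c) / e) / e) (at x)"
proof -
  assume "e \<noteq> 0"
  have "((\<lambda>x. (x - c)/e) has_real_derivative 1/e) (at x)"
    using \<open>e \<noteq> 0\<close> by (auto intro!: derivative_eq_intros)
  from DERIV_chain2[OF S_deriv this] show ?thesis by simp
qed

lemma cont_A: "e \<noteq> 0 \<Longrightarrow> continuous_on A (\<lambda>x. deriv S ((x - c) / e) / e)"
  by (intro continuous_intros continuous_on_compose2[OF contS']) auto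

lemma ramp_has_integral:
  assumes "0 < e"
  shows "((\<lambda>x. deriv S ((x - c) / e) / e) has_integral 1) {c..c+e}"
proof -
  have "((\<lambda>x. deriv S ((x - c) / e) / e) has_integral (S ((c + e - c) / e) - S ((c - c) / e))) {c..c+e}"
    apply (rule fundamental_theorem_of_calculus)
    using assms apply simp
    using S_aff_deriv[of e c] assms
    by (auto simp: has_real_derivative_iff_has_vector_derivative intro: has_vector_derivative_at_within)
  then show ?thesis using assms by (simp add: S_le0 S_ge1)
qed

lemma ramp_int:
  assumes e: "0 < e" and cw: "continuous_on {c..c+e} w" and eta: "\<And>x. x \<in> {c..c+e} \<Longrightarrow> \<bar>w x - w0\<bar> \<le> \<eta>"
  shows "\<bar>integral {c..c+e} (\<lambda>x. w x * (deriv S ((x - c) / e) / e)) - w0\<bar> \<le> KS * \<eta>"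
proof -
  define A where "A = (\<lambda>x. deriv S ((x - c) / e) / e)"
  have IA: "(A has_integral 1) {c..c+e}" unfolding A_def by (rule ramp_has_integral[OF e])
  have cA: "continuous_on {c..c+e} A" unfolding A_def using e by (intro cont_A) auto
  have i1: "(\<lambda>x. w x * A x) integrable_on {c..c+e}"
    by (intro integrable_continuous_real continuous_intros cw cA)
  have i2: "(\<lambda>x. w0 * A x) integrable_on {c..c+e}"
    by (intro integrable_continuous_real continuous_intros cA)
  have "integral {c..c+e} (\<lambda>x. w0 * A x) = w0"
    using IA by (simp add: integral_unique)
  moreover have "integral {c..c+e} (\<lambda>x. (w x - w0) * A x) = integral {c..c+e} (\<lambda>x. w x * A x) - integral {c..c+e} (\<lambda>x. w0 * A x)"
    using integral_diff[OF i1 i2] by (simp add: algebra_simps)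
  ultimately have eq: "integral {c..c+e} (\<lambda>x. w x * A x) - w0 = integral {c..c+e} (\<lambda>x. (w x - w0) * A x)" by simp
  have bA: "\<bar>A x\<bar> \<le> KS / e" for x
    unfolding A_def using KS(2)[of "(x - c) / e"] e by (simp add: abs_div divide_right_mono)
  have "\<bar>integral {c..c+e} (\<lambda>x. (w x - w0) * A x)\<bar> \<le> integral {c..c+e} (\<lambda>x. \<eta> * (KS / e))"
    unfolding real_norm_def[symmetric]
  proof (rule integral_norm_bound_integral)
    show "(\<lambda>x. (w x - w0) * A x) integrable_on {c..c+e}"
      by (intro integrable_continuous_real continuous_intros cw cA)
    fix x assume "x \<in> {c..c+e}"
    then show "norm ((w x - w0) * A x) \<le> \<eta> * (KS / e)"
      using eta bA unfolding real_norm_def abs_mult by (meson abs_ge_zero mult_mono order_trans)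
  qed auto
  also have "\<dots> = KS * \<eta>" using e by simp
  finally show ?thesis using eq unfolding A_def by simp
qed

lemma int_zero_tail:
  fixes f :: "real \<Rightarrow> real"
  assumes "a \<le> c" "c \<le> b" "f integrable_on {a..b}" "\<And>x. x \<in> {c..b} \<Longrightarrow> f x = 0"
  shows "integral {a..b} f = integral {a..c} f"
proof -
  have "integral {c..b} f = integral {c..b} (\<lambda>x. 0)" by (rule integral_cong) (use assms(4) in auto)
  then have "integral {c..b} f = 0" by simp
  then show ?thesis using Henstock_Kurzweil_Integration.integral_combine[OF assms(1-3)] by simp
qed

lemma int_zero_head:
  fixes f :: "real \<Rightarrow> real"
  assumes "a \<le> c" "c \<le> b" "f integrable_on {a..b}" "\<And>x. x \<in> {a..c} \<Longrightarrow> f x = 0"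
  shows "integral {a..b} f = integral {c..b} f"
proof -
  have "integral {a..c} f = integral {a..c} (\<lambda>x. 0)" by (rule integral_cong) (use assms(4) in auto)
  then have "integral {a..c} f = 0" by simp
  then show ?thesis using Henstock_Kurzweil_Integration.integral_combine[OF assms(1-3)] by simp
qed

lemma int_abs_const:
  fixes f :: "real \<Rightarrow> real"
  assumes "a \<le> b" "f integrable_on {a..b}" "\<And>x. x \<in> {a..b} \<Longrightarrow> \<bar>f x\<bar> \<le> M"
  shows "\<bar>integral {a..b} f\<bar> \<le> M * (b - a)"
proof -
  have "norm (integral {a..b} f) \<le> integral {a..b} (\<lambda>x. M)"
    by (rule integral_norm_bound_integral) (use assms in auto)
  then show ?thesis using assms(1) by (simp add: mult.commute)
qed

lemma three_split:
  fixes f :: "real \<Rightarrow> real"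
  assumes "a \<le> c" "c \<le> d" "d \<le> b" "f integrable_on {a..b}" "\<And>x. x \<in> {c..d} \<Longrightarrow> f x = 0"
    "\<And>x. x \<in> {a..b} \<Longrightarrow> \<bar>f x\<bar> \<le> M"
  shows "\<bar>integral {a..b} f\<bar> \<le> M * ((c - a) + (b - d))"
proof -
  have i1: "f integrable_on {a..d}" using assms(4) by (rule integrable_subinterval_real) (use assms in auto)
  have "integral {a..b} f = integral {a..d} f + integral {d..b} f"
    using Henstock_Kurzweil_Integration.integral_combine[where a=a and c=d and b=b and f=f] assms by auto
  moreover have "integral {a..d} f = integral {a..c} f"
    by (rule int_zero_tail) (use assms i1 in auto)
  moreover have "\<bar>integral {a..c} f\<bar> \<le> M * (c - a)"
    by (rule int_abs_const) (use assms in \<open>auto intro: integrable_subinterval_real\<close>)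
  moreover have "\<bar>integral {d..b} f\<bar> \<le> M * (b - d)"
    by (rule int_abs_const) (use assms in \<open>auto intro: integrable_subinterval_real\<close>)
  ultimately show ?thesis by (simp add: algebra_simps)
qed

lemma ftc_approx:
  fixes w v :: "real \<Rightarrow> real"
  assumes wc: "continuous_on {0..1} w" and vc: "continuous_on {0<..1} v"
    and wp: "weak_partial {0<..<1} w 1 v"
    and st: "0 < s" "s < t" "t < 1" and ep: "0 < \<epsilon>" "2 * \<epsilon> \<le> t - s"
    and e1: "\<And>x. x \<in> {s..s+\<epsilon>} \<Longrightarrow> \<bar>w x - w s\<bar> \<le> \<eta>1"
    and e2: "\<And>x. x \<in> {t-\<epsilon>..t} \<Longrightarrow> \<bar>w x - w t\<bar> \<le> \<eta>2"
    and M: "\<And>x. x \<in> {s..t} \<Longrightarrow> \<bar>v x\<bar> \<le> M"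
  shows "\<bar>w t - w s - integral {s..t} v\<bar> \<le> KS * (\<eta>1 + \<eta>2) + 2 * \<epsilon> * M"
proof -
  have pq: "0 < \<epsilon>" "0 < \<epsilon>" "s + \<epsilon> \<le> t - \<epsilon>" "0 < s" "t - \<epsilon> + \<epsilon> < 1" using st ep by auto
  note W = weak_phi[OF pq wp]
  define A1 where "A1 = (\<lambda>x. deriv S ((x - s) / \<epsilon>) / \<epsilon>)"
  define A2 where "A2 = (\<lambda>x. deriv S ((x - (t - \<epsilon>)) / \<epsilon>) / \<epsilon>)"
  define \<Phi> where "\<Phi> = phi s \<epsilon> (t - \<epsilon>) \<epsilon>"
  have dph: "dphi s \<epsilon> (t - \<epsilon>) \<epsilon> x = A1 x - A2 x" for x by (simp add: dphi_def A1_def A2_def)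
  have tt: "t - \<epsilon> + \<epsilon> = t" by simp
  have wst: "continuous_on {s..t} w" using wc st by (auto intro: continuous_on_subset)
  have vst: "continuous_on {s..t} v" using vc st by (auto intro: continuous_on_subset)
  have cA1: "continuous_on X A1" for X unfolding A1_def using ep by (intro cont_A) auto
  have cA2: "continuous_on X A2" for X unfolding A2_def using ep by (intro cont_A) auto
  have cPhi: "continuous_on X \<Phi>" for X
    unfolding \<Phi>_def using phi_deriv[of \<epsilon> \<epsilon> s "t - \<epsilon>"] ep
    by (intro continuous_at_imp_continuous_on) (auto intro: DERIV_isCont)
  have iA1: "(\<lambda>x. w x * A1 x) integrable_on {s..t}"
    by (intro integrable_continuous_real continuous_intros wst cA1)
  have iA2: "(\<lambda>x. w x * A2 x) integrable_on {s..t}"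
    by (intro integrable_continuous_real continuous_intros wst cA2)
  have eqW: "integral {s..t} (\<lambda>x. w x * A1 x) - integral {s..t} (\<lambda>x. w x * A2 x)
      = - integral {s..t} (\<lambda>x. v x * \<Phi> x)"
    using W(3) integral_diff[OF iA1 iA2] unfolding tt dph \<Phi>_def by (simp add: algebra_simps)
  have r1: "integral {s..t} (\<lambda>x. w x * A1 x) = integral {s..s+\<epsilon>} (\<lambda>x. w x * A1 x)"
    by (rule int_zero_tail) (use ep iA1 in \<open>auto simp: A1_def S'_out\<close>)
  have r2: "integral {s..t} (\<lambda>x. w x * A2 x) = integral {t-\<epsilon>..t} (\<lambda>x. w x * A2 x)"
    by (rule int_zero_head) (use ep iA2 in \<open>auto simp: A2_def S'_out divide_le_0_iff\<close>)
  have b1: "\<bar>integral {s..s+\<epsilon>} (\<lambda>x. w x * A1 x) - w s\<bar> \<le> KS * \<eta>1"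
    unfolding A1_def
    by (rule ramp_int[OF ep(1)]) (use wc st ep e1 in \<open>auto intro: continuous_on_subset\<close>)
  have b2: "\<bar>integral {t-\<epsilon>..t} (\<lambda>x. w x * A2 x) - w t\<bar> \<le> KS * \<eta>2"
  proof -
    have "continuous_on {t-\<epsilon>..t} w" using wc st ep by (auto intro: continuous_on_subset)
    then show ?thesis
      using ramp_int[OF ep(1), of "t - \<epsilon>" w "w t" \<eta>2] e2 unfolding A2_def tt by blast
  qed
  have iv: "(\<lambda>x. v x * \<Phi> x - v x) integrable_on {s..t}"
    by (intro integrable_continuous_real continuous_intros vst cPhi)
  have b3: "\<bar>integral {s..t} (\<lambda>x. v x * \<Phi> x - v x)\<bar> \<le> M * ((s + \<epsilon> - s) + (t - (t - \<epsilon>)))"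
  proof (rule three_split[OF _ _ _ iv])
    fix x assume "x \<in> {s+\<epsilon>..t-\<epsilon>}"
    then show "v x * \<Phi> x - v x = 0" using phi_one[OF pq(1-3), of x] by (simp add: \<Phi>_def)
  next
    fix x assume x: "x \<in> {s..t}"
    have "\<bar>v x * \<Phi> x - v x\<bar> = \<bar>v x\<bar> * \<bar>1 - \<Phi> x\<bar>" by (simp add: abs_mult[symmetric] algebra_simps)
    also have "\<dots> \<le> M * 1"
      using M[OF x] phi_nonneg[OF pq(1-3), of x] phi_le1[OF pq(1-3), of x]
      by (intro mult_mono) (auto simp: \<Phi>_def)
    finally show "\<bar>v x * \<Phi> x - v x\<bar> \<le> M" by simp
  qed (use ep in auto)
  have iv2: "(\<lambda>x. v x * \<Phi> x) integrable_on {s..t}"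
    by (intro integrable_continuous_real continuous_intros vst cPhi)
  have iv3: "v integrable_on {s..t}" by (intro integrable_continuous_real vst)
  have "integral {s..t} (\<lambda>x. v x * \<Phi> x - v x) = integral {s..t} (\<lambda>x. v x * \<Phi> x) - integral {s..t} v"
    using integral_diff[OF iv2 iv3] by simp
  moreover have "KS * (\<eta>1 + \<eta>2) = KS * \<eta>1 + KS * \<eta>2" "M * ((s + \<epsilon> - s) + (t - (t - \<epsilon>))) = 2 * \<epsilon> * M"
    by (auto simp: algebra_simps)
  ultimately show ?thesis using eqW r1 r2 b1 b2 b3 unfolding abs_le_iff by linarith
qed

lemma weak_ftc:
  fixes w v :: "real \<Rightarrow> real"
  assumes wc: "continuous_on {0..1} w" and vc: "continuous_on {0<..1} v"
    and wp: "weak_partial {0<..<1} w 1 v"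
    and st: "0 < s" "s < t" "t < 1"
  shows "w t - w s = integral {s..t} v"
proof -
  have vst: "continuous_on {s..t} v" using vc st by (auto intro: continuous_on_subset)
  have "bounded (v ` {s..t})" using vst by (intro compact_imp_bounded compact_continuous_image) auto
  then obtain M where M: "M > 0" "\<And>x. x \<in> {s..t} \<Longrightarrow> \<bar>v x\<bar> \<le> M"
    using bounded_pos by (metis image_eqI real_norm_def)
  define D where "D = w t - w s - integral {s..t} v"
  have "\<bar>D\<bar> \<le> \<eta>" if "\<eta> > 0" for \<eta>
  proof -
    define \<eta>' where "\<eta>' = \<eta> / (3 * KS)"
    have "\<eta>' > 0" using that KS(1) by (simp add: \<eta>'_def)
    have s01: "s \<in> {0..1}" "t \<in> {0..1}" using st by auto
    obtain d1 where d1: "d1 > 0" "\<And>x. x \<in> {0..1} \<Longrightarrow> dist x s < d1 \<Longrightarrow> dist (w x) (w s) < \<eta>'"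
      using wc s01(1) \<open>\<eta>' > 0\<close> unfolding continuous_on_iff by metis
    obtain d2 where d2: "d2 > 0" "\<And>x. x \<in> {0..1} \<Longrightarrow> dist x t < d2 \<Longrightarrow> dist (w x) (w t) < \<eta>'"
      using wc s01(2) \<open>\<eta>' > 0\<close> unfolding continuous_on_iff by metis
    define \<epsilon> where "\<epsilon> = min (min (d1/2) (d2/2)) (min ((t-s)/2) (\<eta> / (6 * M)))"
    have ep: "0 < \<epsilon>" "2 * \<epsilon> \<le> t - s" using d1 d2 st M that
      by (auto simp: \<epsilon>_def min_def)
    have e1: "\<bar>w x - w s\<bar> \<le> \<eta>'" if "x \<in> {s..s+\<epsilon>}" for x
    proof -
      have "x \<in> {0..1}" "dist x s < d1" using that st ep d1 by (auto simp: \<epsilon>_def dist_real_def)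
      then show ?thesis using d1(2)[of x] by (simp add: dist_real_def)
    qed
    have e2: "\<bar>w x - w t\<bar> \<le> \<eta>'" if "x \<in> {t-\<epsilon>..t}" for x
    proof -
      have "x \<in> {0..1}" "dist x t < d2" using that st ep d2 by (auto simp: \<epsilon>_def dist_real_def)
      then show ?thesis using d2(2)[of x] by (simp add: dist_real_def)
    qed
    have "\<bar>D\<bar> \<le> KS * (\<eta>' + \<eta>') + 2 * \<epsilon> * M"
      unfolding D_def by (rule ftc_approx[OF wc vc wp st ep e1 e2 M(2)])
    also have "KS * (\<eta>' + \<eta>') = 2 * \<eta> / 3" using KS(1) by (simp add: \<eta>'_def)
    also have "2 * \<epsilon> * M \<le> 2 * (\<eta> / (6 * M)) * M"
      using M(1) by (intro mult_right_mono mult_left_mono) (auto simp: \<epsilon>_def)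
    also have "\<dots> = \<eta> / 3" using M(1) by simp
    finally show ?thesis by simp
  qed
  then have "D = 0"
  proof -
    assume h: "\<And>\<eta>. \<eta> > 0 \<Longrightarrow> \<bar>D\<bar> \<le> \<eta>"
    show "D = 0"
    proof (rule ccontr)
      assume "D \<noteq> 0"
      then have "\<bar>D\<bar> / 2 > 0" by simp
      from h[OF this] show False using \<open>D \<noteq> 0\<close> by simp
    qed
  qed
  then show ?thesis by (simp add: D_def)
qed

definition Fh :: "real \<Rightarrow> (real \<Rightarrow> real) \<Rightarrow> (real \<Rightarrow> real) \<Rightarrow> (real \<Rightarrow> real) \<Rightarrow> (real \<Rightarrow> real) \<Rightarrow> real \<Rightarrow> real" where
  "Fh h u du dw ddw r = (u r)\<^sup>2 / r + r * (du r + (dw r)\<^sup>2 - 1)\<^sup>2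
               + h\<^sup>2 * (r * (ddw r)\<^sup>2 + (dw r)\<^sup>2 / r)"

lemma E_lebesgue: "E_energy h u du dw ddw = (\<integral>\<^sup>+ x. ennreal (Fh h u du dw ddw x) * indicator {0<..<1} x \<partial>lebesgue)"
  unfolding E_energy_def Fh_def by (simp add: nn_integral_completion)

lemma energy_part:
  fixes G :: "real \<Rightarrow> real"
  assumes E: "E_energy h u du dw ddw = ennreal e" and e0: "e \<ge> 0"
    and K: "{\<alpha>..\<beta>} \<subseteq> {0<..<1}"
    and Gm: "G \<in> borel_measurable (lebesgue_on {\<alpha>..\<beta>})"
    and G: "\<And>x. x \<in> {\<alpha>..\<beta>} \<Longrightarrow> 0 \<le> G x \<and> G x \<le> Fh h u du dw ddw x"
  shows "G absolutely_integrable_on {\<alpha>..\<beta>}" "integral {\<alpha>..\<beta>} G \<le> e"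
proof -
  define G' where "G' = (\<lambda>x. if x \<in> {\<alpha>..\<beta>} then G x else 0)"
  have G'm: "G' \<in> borel_measurable lebesgue"
    unfolding G'_def by (rule borel_measurable_if_I[OF Gm]) auto
  have G'nn: "0 \<le> G' x" for x using G by (auto simp: G'_def)
  have le: "(\<integral>\<^sup>+ x. ennreal (G' x) \<partial>lebesgue) \<le> E_energy h u du dw ddw"
    unfolding E_lebesgue
  proof (rule nn_integral_mono)
    fix x
    show "ennreal (G' x) \<le> ennreal (Fh h u du dw ddw x) * indicator {0<..<1} x"
      using G[of x] K by (auto simp: G'_def indicator_def)
  qed
  have Etop: "E_energy h u du dw ddw < \<infinity>" using E by simp
  have fin: "(\<integral>\<^sup>+ x. ennreal (G' x) \<partial>lebesgue) < \<infinity>" using le Etop by (simp add: le_less_trans)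
  have intG': "integrable lebesgue G'"
    by (rule integrableI_nonneg[OF G'm]) (use G'nn fin in auto)
  have eqf: "(\<lambda>x. indicator {\<alpha>..\<beta>} x *\<^sub>R G x) = G'"
    by (auto simp: G'_def indicator_def fun_eq_iff)
  show ai: "G absolutely_integrable_on {\<alpha>..\<beta>}"
    unfolding set_integrable_def eqf by (rule intG')
  have "integral {\<alpha>..\<beta>} G = (LINT x:{\<alpha>..\<beta>}|lebesgue. G x)"
    by (rule set_lebesgue_integral_eq_integral(2)[OF ai, symmetric])
  also have "\<dots> = integral\<^sup>L lebesgue G'"
    unfolding set_lebesgue_integral_def eqf ..
  also have "\<dots> = enn2real (\<integral>\<^sup>+ x. ennreal (G' x) \<partial>lebesgue)"
    by (rule integral_eq_nn_integral[OF G'm]) (use G'nn in auto)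
  also have "\<dots> \<le> e"
    using enn2real_mono[OF le] Etop E e0 by (simp add: top_ennreal_def)
  finally show "integral {\<alpha>..\<beta>} G \<le> e" .
qed

lemma amgm_pt:
  fixes A y :: real assumes "A > 0" shows "\<bar>y\<bar> \<le> A / 2 * y\<^sup>2 + 1 / (2 * A)"
proof -
  have "0 \<le> (A * \<bar>y\<bar> - 1)\<^sup>2" by simp
  then have "2 * A * \<bar>y\<bar> \<le> A\<^sup>2 * y\<^sup>2 + 1" by (simp add: power2_eq_square algebra_simps)
  then show ?thesis using assms by (simp add: field_simps power2_eq_square)
qed

lemma amgm_int:
  fixes f wt :: "real \<Rightarrow> real"
  assumes f: "f absolutely_integrable_on {\<alpha>..\<beta>}"
    and g: "(\<lambda>x. wt x * (f x)\<^sup>2) absolutely_integrable_on {\<alpha>..\<beta>}"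
    and wc: "continuous_on {\<alpha>..\<beta>} wt" and wp: "\<And>x. x \<in> {\<alpha>..\<beta>} \<Longrightarrow> wt x > 0" and l: "lam > 0"
  shows "integral {\<alpha>..\<beta>} (\<lambda>x. \<bar>f x\<bar>) \<le> lam / 2 * integral {\<alpha>..\<beta>} (\<lambda>x. wt x * (f x)\<^sup>2) + 1 / (2 * lam) * integral {\<alpha>..\<beta>} (\<lambda>x. 1 / wt x)"
proof -
  have i1: "(\<lambda>x. \<bar>f x\<bar>) integrable_on {\<alpha>..\<beta>}"
    using set_lebesgue_integral_eq_integral(1)[OF set_integrable_abs[OF f]] by simp
  have i2: "(\<lambda>x. wt x * (f x)\<^sup>2) integrable_on {\<alpha>..\<beta>}"
    using set_lebesgue_integral_eq_integral(1)[OF g] by simp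
  have c3: "continuous_on {\<alpha>..\<beta>} (\<lambda>x. 1 / wt x)"
    apply (intro continuous_intros wc) using wp by fastforce
  have i3: "(\<lambda>x. 1 / wt x) integrable_on {\<alpha>..\<beta>}" by (rule integrable_continuous_real[OF c3])
  have "integral {\<alpha>..\<beta>} (\<lambda>x. \<bar>f x\<bar>) \<le> integral {\<alpha>..\<beta>} (\<lambda>x. lam / 2 * (wt x * (f x)\<^sup>2) + 1 / (2 * lam) * (1 / wt x))"
  proof (rule integral_le[OF i1])
    show "(\<lambda>x. lam / 2 * (wt x * (f x)\<^sup>2) + 1 / (2 * lam) * (1 / wt x)) integrable_on {\<alpha>..\<beta>}"
      by (intro integrable_add integrable_on_mult_right i2 i3)
    fix x assume x: "x \<in> {\<alpha>..\<beta>}"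
    have "lam * wt x > 0" using wp[OF x] l by simp
    from amgm_pt[OF this, of "f x"]
    show "\<bar>f x\<bar> \<le> lam / 2 * (wt x * (f x)\<^sup>2) + 1 / (2 * lam) * (1 / wt x)"
      by (simp add: field_simps)
  qed
  also have "\<dots> = integral {\<alpha>..\<beta>} (\<lambda>x. lam / 2 * (wt x * (f x)\<^sup>2)) + integral {\<alpha>..\<beta>} (\<lambda>x. 1 / (2 * lam) * (1 / wt x))"
    by (rule integral_add) (rule integrable_on_mult_right, fact)+
  also have "\<dots> = lam / 2 * integral {\<alpha>..\<beta>} (\<lambda>x. wt x * (f x)\<^sup>2) + 1 / (2 * lam) * integral {\<alpha>..\<beta>} (\<lambda>x. 1 / wt x)"
    by (simp only: integral_mult_right)
  finally show ?thesis .
qed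

lemma integral_inv:
  fixes \<alpha> \<beta> :: real
  assumes "0 < \<alpha>" "\<alpha> \<le> \<beta>" shows "integral {\<alpha>..\<beta>} (\<lambda>x. 1 / x) = ln \<beta> - ln \<alpha>"
proof -
  have "((\<lambda>x. 1 / x) has_integral (ln \<beta> - ln \<alpha>)) {\<alpha>..\<beta>}"
  proof (rule fundamental_theorem_of_calculus[OF assms(2)])
    fix x assume x: "x \<in> {\<alpha>..\<beta>}"
    then have "x > 0" using assms by auto
    then have "(ln has_real_derivative 1 / x) (at x)" by (rule DERIV_ln_divide)
    then show "(ln has_vector_derivative 1 / x) (at x within {\<alpha>..\<beta>})"
      unfolding has_real_derivative_iff_has_vector_derivative by (rule has_vector_derivative_at_within)
  qed
  then show ?thesis by (rule integral_unique)
qed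

lemma integral_id:
  fixes \<alpha> \<beta> :: real
  assumes "\<alpha> \<le> \<beta>" shows "integral {\<alpha>..\<beta>} (\<lambda>x. x) = (\<beta>\<^sup>2 - \<alpha>\<^sup>2) / 2"
proof -
  have "((\<lambda>x. x) has_integral (\<beta>\<^sup>2/2 - \<alpha>\<^sup>2/2)) {\<alpha>..\<beta>}"
    apply (rule fundamental_theorem_of_calculus[OF assms, where f="\<lambda>x. x\<^sup>2/2"])
    by (auto simp: has_real_derivative_iff_has_vector_derivative[symmetric]
        intro!: derivative_eq_intros)
  then show ?thesis by (simp add: integral_unique diff_divide_distrib)
qed

lemma wa_bound:
  fixes w v :: "real \<Rightarrow> real"
  assumes d: "0 < \<delta>" "\<delta> \<le> 1" and wc: "continuous_on {0..1} w" and w1: "w 1 = 1 - \<delta>"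
    and vc: "continuous_on {0<..1} v" and wp: "weak_partial {0<..<1} w 1 v"
    and bnd: "\<And>r. r \<in> {\<delta>/8..1} \<Longrightarrow> v r < -1/2"
  shows "w (\<delta>/8) \<ge> 7/16"
proof -
  define a where "a = \<delta>/8"
  have a: "0 < a" "a \<le> 1/8" using d by (auto simp: a_def)
  have key: "w a \<ge> w t + (t - a) / 2" if t: "a < t" "t < 1" for t
  proof -
    have "w t - w a = integral {a..t} v" by (rule weak_ftc[OF wc vc wp]) (use a t in auto)
    also have "\<dots> \<le> integral {a..t} (\<lambda>x. -1/2)"
    proof (rule integral_le)
      show "v integrable_on {a..t}"
        by (rule integrable_continuous_real, rule continuous_on_subset[OF vc]) (use a t in auto)
      fix x assume "x \<in> {a..t}" then show "v x \<le> -1/2" using bnd[of x] t by (auto simp: a_def)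
    qed auto
    also have "\<dots> = - (t - a) / 2" using t by (simp add: field_simps)
    finally show ?thesis by (simp add: field_simps)
  qed
  define R where "R = 1 - \<delta> + (1 - a) / 2"
  have "w a \<ge> R"
  proof (rule ccontr)
    assume "\<not> w a \<ge> R"
    then have gap: "R - w a > 0" by simp
    obtain dd where dd: "dd > 0" "\<And>x. x \<in> {0..1} \<Longrightarrow> dist x 1 < dd \<Longrightarrow> dist (w x) (w 1) < (R - w a) / 2"
      using wc gap unfolding continuous_on_iff by (metis atLeastAtMost_iff half_gt_zero order_refl zero_le_one)
    define t where "t = 1 - min (dd/2) (min ((R - w a)/2) ((1 - a)/2))"
    define m where "m = min (dd/2) (min ((R - w a)/2) ((1 - a)/2))"
    have m: "m \<le> (1 - a)/2" "m \<le> (R - w a)/2" "m \<le> dd/2" "m > 0" using gap dd a unfolding m_def min_def by auto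
    have t: "a < t" "t < 1" "1 - t \<le> (R - w a)/2" "dist t 1 < dd"
      unfolding t_def m_def[symmetric] dist_real_def using m a dd by auto
    have "\<bar>w t - w 1\<bar> < (R - w a)/2" using dd(2)[of t] t a by (auto simp: dist_real_def)
    then have h2: "w t > w 1 - (R - w a)/2" unfolding abs_less_iff by linarith
    have h1: "w a \<ge> w t + (t - a) / 2" using key[OF t(1,2)] .
    from h1 h2 have "w a \<ge> w t + (t - a) / 2" "w t > w 1 - (R - w a)/2" by auto
    then show False using t(3) gap unfolding R_def w1 by (simp add: field_simps)
  qed
  moreover have "R \<ge> 7/16" using d by (simp add: R_def a_def field_simps)
  ultimately show ?thesis by (simp add: a_def)
qed

context
  fixes \<delta> h e :: real and u w du dw ddw :: "real \<Rightarrow> real"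
  assumes dl: "0 < \<delta>" "\<delta> \<le> 1" and hh: "0 < h" "h \<le> 1/2" "h \<le> \<delta>"
    and wc: "continuous_on {0..1} w" and w0: "w 0 = 0" and w1: "w 1 = 1 - \<delta>"
    and wpu: "weak_partial {0<..<1} u 1 du" and wpw: "weak_partial {0<..<1} w 1 dw"
    and vc: "continuous_on {0<..1} dw"
    and bnd: "\<And>r. r \<in> {\<delta>/8..1} \<Longrightarrow> dw r < -1/2"
    and E: "E_energy h u du dw ddw = ennreal e" and e0: "e \<ge> 0"
begin

lemma Fh_ge:
  assumes "r > 0"
  shows "h\<^sup>2 * ((dw r)\<^sup>2 / r) \<le> Fh h u du dw ddw r"
    "r * (du r + (dw r)\<^sup>2 - 1)\<^sup>2 \<le> Fh h u du dw ddw r"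
    "(u r)\<^sup>2 / r \<le> Fh h u du dw ddw r"
proof -
  have a: "0 \<le> (u r)\<^sup>2 / r" "0 \<le> r * (du r + (dw r)\<^sup>2 - 1)\<^sup>2" "0 \<le> h\<^sup>2 * (r * (ddw r)\<^sup>2)"
    "0 \<le> h\<^sup>2 * ((dw r)\<^sup>2 / r)"
    using assms by auto
  show "h\<^sup>2 * ((dw r)\<^sup>2 / r) \<le> Fh h u du dw ddw r"
    "r * (du r + (dw r)\<^sup>2 - 1)\<^sup>2 \<le> Fh h u du dw ddw r"
    "(u r)\<^sup>2 / r \<le> Fh h u du dw ddw r"
    unfolding Fh_def using a by (simp_all add: distrib_left)
qed

lemma vc_sub: "0 < \<alpha> \<Longrightarrow> \<beta> \<le> 1 \<Longrightarrow> continuous_on {\<alpha>..\<beta>} dw"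
  by (rule continuous_on_subset[OF vc]) auto

lemma v_bending:
  assumes "0 < \<alpha>" "\<alpha> \<le> \<beta>" "\<beta> < 1"
  shows "integral {\<alpha>..\<beta>} (\<lambda>r. (1/r) * (dw r)\<^sup>2) \<le> e / h\<^sup>2"
proof -
  have c: "continuous_on {\<alpha>..\<beta>} (\<lambda>r. h\<^sup>2 * ((1/r) * (dw r)\<^sup>2))"
    using vc_sub[of \<alpha> \<beta>] assms by (intro continuous_intros) auto
  have "integral {\<alpha>..\<beta>} (\<lambda>r. h\<^sup>2 * ((1/r) * (dw r)\<^sup>2)) \<le> e"
  proof (rule energy_part(2)[OF E e0])
    show "{\<alpha>..\<beta>} \<subseteq> {0<..<1}" using assms by auto
    show "(\<lambda>r. h\<^sup>2 * ((1/r) * (dw r)\<^sup>2)) \<in> borel_measurable (lebesgue_on {\<alpha>..\<beta>})"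
      by (rule continuous_imp_measurable_on_sets_lebesgue[OF c]) auto
    fix x assume "x \<in> {\<alpha>..\<beta>}"
    then have "x > 0" using assms by auto
    then show "0 \<le> h\<^sup>2 * ((1/x) * (dw x)\<^sup>2) \<and> h\<^sup>2 * ((1/x) * (dw x)\<^sup>2) \<le> Fh h u du dw ddw x"
      using Fh_ge(1)[of x] by simp
  qed
  then have "h\<^sup>2 * integral {\<alpha>..\<beta>} (\<lambda>r. (1/r) * (dw r)\<^sup>2) \<le> e" by (simp only: integral_mult_right)
  then show ?thesis using hh by (simp add: field_simps mult.commute)
qed

lemma I1_bound:
  assumes "0 < s" "s \<le> b" "b < 1"
  shows "integral {s..b} (\<lambda>r. \<bar>dw r\<bar>) \<le> 8 * b\<^sup>2 * e / h\<^sup>2 + 1/64"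
proof -
  have cv: "continuous_on {s..b} dw" using vc_sub[of s b] assms by auto
  have "integral {s..b} (\<lambda>r. \<bar>dw r\<bar>) \<le> (16 * b\<^sup>2) / 2 * integral {s..b} (\<lambda>r. (1/r) * (dw r)\<^sup>2)
      + 1 / (2 * (16 * b\<^sup>2)) * integral {s..b} (\<lambda>r. 1 / (1/r))"
  proof (rule amgm_int)
    show "dw absolutely_integrable_on {s..b}" by (rule absolutely_integrable_continuous_real[OF cv])
    show "(\<lambda>r. (1/r) * (dw r)\<^sup>2) absolutely_integrable_on {s..b}"
      by (rule absolutely_integrable_continuous_real) (use cv assms in \<open>auto intro!: continuous_intros\<close>)
    show "continuous_on {s..b} (\<lambda>r. 1/r)" using assms by (auto intro!: continuous_intros)
  qed (use assms in auto)
  also have "integral {s..b} (\<lambda>r. 1 / (1/r)) = (b\<^sup>2 - s\<^sup>2) / 2"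
    using integral_id[of s b] assms by simp
  also have "(16 * b\<^sup>2) / 2 * integral {s..b} (\<lambda>r. (1/r) * (dw r)\<^sup>2) \<le> (16 * b\<^sup>2) / 2 * (e / h\<^sup>2)"
    using v_bending[of s b] assms by (intro mult_left_mono) auto
  also have "1 / (2 * (16 * b\<^sup>2)) * ((b\<^sup>2 - s\<^sup>2) / 2) \<le> 1 / (2 * (16 * b\<^sup>2)) * (b\<^sup>2 / 2)"
    using assms by (intro mult_left_mono) auto
  also have "1 / (2 * (16 * b\<^sup>2)) * (b\<^sup>2 / 2) = 1/64" using assms by (simp add: field_simps)
  finally show ?thesis by (simp add: field_simps)
qed

lemma dphi_bound:
  assumes "0 < h" "h < a" "x \<in> {h/2..a+a}"
  shows "\<bar>dphi (h/2) (h/2) a a x\<bar> \<le> 2 * KS / x"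
proof -
  have x0: "x > 0" using assms by auto
  have t1: "\<bar>deriv S ((x - h/2) / (h/2)) / (h/2)\<bar> \<le> (if x \<le> h then 2 * KS / h else 0)"
  proof (cases "x \<le> h")
    case True then show ?thesis using KS(2)[of "(x - h/2) / (h/2)"] assms by (simp add: abs_div field_simps)
  next
    case False then have "(x - h/2) / (h/2) \<ge> 1" using assms by (simp add: field_simps)
    then show ?thesis using False S'_out by simp
  qed
  have t2: "\<bar>deriv S ((x - a) / a) / a\<bar> \<le> (if x \<ge> a then KS / a else 0)"
  proof (cases "x \<ge> a")
    case True then show ?thesis using KS(2)[of "(x - a) / a"] assms by (simp add: abs_div field_simps)
  next
    case False then have "(x - a) / a \<le> 0" using assms by (simp add: field_simps)
    then show ?thesis using False S'_out by simp
  qed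
  have "\<bar>dphi (h/2) (h/2) a a x\<bar> \<le> (if x \<le> h then 2 * KS / h else 0) + (if x \<ge> a then KS / a else 0)"
    unfolding dphi_def using t1 t2 by (smt (verit))
  also have "\<dots> \<le> 2 * KS / x"
  proof -
    have k: "KS > 0" using KS(1) .
    have "2 * KS / h \<le> 2 * KS / x" if "x \<le> h" using that x0 k by (simp add: frac_le)
    moreover have "KS / a \<le> 2 * KS / x" if "x \<ge> a" using that x0 k assms by (simp add: field_simps)
    moreover have "\<not> (x \<le> h \<and> x \<ge> a)" using assms by auto
    moreover have "0 \<le> 2 * KS / x" using k x0 by simp
    ultimately show ?thesis by auto
  qed
  finally show ?thesis .
qed

lemma est_main:
  assumes ha: "h < \<delta>/8" and lam: "lam > 0"
  shows "integral {h..\<delta>/8} (\<lambda>r. (dw r)\<^sup>2) \<le> 2 * (\<delta>/8) + (1 + 2 * KS) * (lam / 2 * e + (ln (\<delta>/8 + \<delta>/8) - ln (h/2)) / (2 * lam))"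
proof -
  define a where "a = \<delta>/8"
  have a: "0 < a" "a \<le> 1/8" "h < a" "0 < h" using dl ha hh by (auto simp: a_def)
  define K where "K = {h/2..a+a}"
  define \<phi> where "\<phi> = phi (h/2) (h/2) a a"
  define d\<phi> where "d\<phi> = dphi (h/2) (h/2) a a"
  define g where "g = (\<lambda>r. du r + (dw r)\<^sup>2 - 1)"
  define Lk where "Lk = ln (a + a) - ln (h/2)"
  have pq: "0 < h/2" "0 < a" "h/2 + h/2 \<le> a" "0 < h/2" "a + a < 1" using a hh by auto
  note W = weak_phi[OF pq wpu]
  have Ksub: "K \<subseteq> {0<..<1}" using pq by (auto simp: K_def)
  have K0: "\<And>x. x \<in> K \<Longrightarrow> x > 0" using Ksub by auto
  have cv: "continuous_on K dw" unfolding K_def by (rule vc_sub) (use pq in auto)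
  have cphi: "continuous_on K \<phi>"
    unfolding \<phi>_def using phi_deriv[of "h/2" a "h/2" a] pq
    by (intro continuous_at_imp_continuous_on) (auto intro: DERIV_isCont)
  have lu: "loc_integrable_on {0<..<1} u" and ldu: "loc_integrable_on {0<..<1} du"
    using wpu unfolding weak_partial_def by auto
  have duK: "du absolutely_integrable_on K" unfolding K_def by (rule loc_int_K[OF pq ldu])
  have uK: "u absolutely_integrable_on K" unfolding K_def by (rule loc_int_K[OF pq lu])
  have cv2: "continuous_on K (\<lambda>r. (dw r)\<^sup>2 - 1)" using cv by (intro continuous_intros)
  have gK: "g absolutely_integrable_on K"
  proof -
    have "(\<lambda>r. du r + ((dw r)\<^sup>2 - 1)) absolutely_integrable_on K"
      by (rule set_integral_add(1)[OF duK]) (use cv2 in \<open>simp add: K_def absolutely_integrable_continuous_real\<close>)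
    then show ?thesis by (simp add: g_def algebra_simps)
  qed
  have gphiK: "(\<lambda>r. g r * \<phi> r) absolutely_integrable_on K"
    unfolding K_def by (rule abs_int_prod_cont) (use cphi gK in \<open>auto simp: K_def\<close>)
  have ig: "(\<lambda>r. g r * \<phi> r) integrable_on K" using set_lebesgue_integral_eq_integral(1)[OF gphiK] .
  have iv: "(\<lambda>r. (dw r)\<^sup>2 * \<phi> r) integrable_on K"
    unfolding K_def by (intro integrable_continuous_real continuous_intros) (use cv cphi in \<open>auto simp: K_def\<close>)
  have iphi: "\<phi> integrable_on K" unfolding K_def by (intro integrable_continuous_real) (use cphi in \<open>auto simp: K_def\<close>)
  have "integral K (\<lambda>r. du r * \<phi> r) = integral K (\<lambda>r. g r * \<phi> r - (dw r)\<^sup>2 * \<phi> r + \<phi> r)"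
    by (rule integral_cong) (simp add: g_def algebra_simps)
  also have "\<dots> = integral K (\<lambda>r. g r * \<phi> r) - integral K (\<lambda>r. (dw r)\<^sup>2 * \<phi> r) + integral K \<phi>"
    using ig iv iphi by (simp add: integral_add integral_diff integrable_diff)
  finally have id1: "integral K (\<lambda>r. du r * \<phi> r) = integral K (\<lambda>r. g r * \<phi> r) - integral K (\<lambda>r. (dw r)\<^sup>2 * \<phi> r) + integral K \<phi>" .
  have id2: "integral K (\<lambda>r. u r * d\<phi> r) = - integral K (\<lambda>r. du r * \<phi> r)"
    using W(3) unfolding K_def \<phi>_def d\<phi>_def .
  have main_id: "integral K (\<lambda>r. (dw r)\<^sup>2 * \<phi> r) = integral K (\<lambda>r. g r * \<phi> r) + integral K \<phi> + integral K (\<lambda>r. u r * d\<phi> r)"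
    using id1 id2 by simp
  have hsub: "{h..a} \<subseteq> K" using a hh by (auto simp: K_def)
  have S6: "integral {h..a} (\<lambda>r. (dw r)\<^sup>2) \<le> integral K (\<lambda>r. (dw r)\<^sup>2 * \<phi> r)"
  proof -
    have "integral {h..a} (\<lambda>r. (dw r)\<^sup>2) = integral {h..a} (\<lambda>r. (dw r)\<^sup>2 * \<phi> r)"
      by (rule integral_cong) (use phi_one[OF pq(1-3)] in \<open>auto simp: \<phi>_def\<close>)
    also have "\<dots> \<le> integral K (\<lambda>r. (dw r)\<^sup>2 * \<phi> r)"
    proof (rule integral_subset_le[OF hsub _ iv])
      show "(\<lambda>r. (dw r)\<^sup>2 * \<phi> r) integrable_on {h..a}"
        by (rule integrable_subinterval_real[OF iv[unfolded K_def]]) (use a in auto)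
      show "\<forall>x\<in>K. 0 \<le> (dw x)\<^sup>2 * \<phi> x" using phi_nonneg[OF pq(1-3)] by (simp add: \<phi>_def)
    qed
    finally show ?thesis .
  qed
  have S7: "integral K \<phi> \<le> 2 * a"
  proof -
    have "integral K \<phi> \<le> integral K (\<lambda>r. 1)"
      by (rule integral_le[OF iphi]) (use phi_le1[OF pq(1-3)] in \<open>auto simp: K_def \<phi>_def\<close>)
    also have "\<dots> = a + a - h/2" using pq by (simp add: K_def)
    finally show ?thesis using hh by simp
  qed
  have Klm: "K \<in> sets lebesgue" by (simp add: K_def)
  have gm: "g \<in> borel_measurable (lebesgue_on K)" using gK absolutely_integrable_measurable[OF Klm] by auto
  have um: "u \<in> borel_measurable (lebesgue_on K)" using uK absolutely_integrable_measurable[OF Klm] by auto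
  have idm: "(\<lambda>r::real. r) \<in> borel_measurable (lebesgue_on K)"
    by (rule continuous_imp_measurable_on_sets_lebesgue[OF continuous_on_id Klm])
  have invm: "(\<lambda>r::real. 1/r) \<in> borel_measurable (lebesgue_on K)"
    by (rule continuous_imp_measurable_on_sets_lebesgue[OF _ Klm]) (use K0 in \<open>auto intro!: continuous_intros\<close>)
  have Lk: "integral K (\<lambda>r. 1 / r) = Lk" unfolding K_def Lk_def using pq by (intro integral_inv) auto
  have Kint: "K = {h/2..a+a}" by (simp add: K_def)
  have gE: "(\<lambda>r. r * (g r)\<^sup>2) absolutely_integrable_on K" "integral K (\<lambda>r. r * (g r)\<^sup>2) \<le> e"
  proof -
    have m: "(\<lambda>r. r * (g r)\<^sup>2) \<in> borel_measurable (lebesgue_on K)"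
      by (intro borel_measurable_times borel_measurable_power idm gm)
    have b: "\<And>x. x \<in> K \<Longrightarrow> 0 \<le> x * (g x)\<^sup>2 \<and> x * (g x)\<^sup>2 \<le> Fh h u du dw ddw x"
      using K0 Fh_ge(2) by (auto simp: g_def less_imp_le)
    show "(\<lambda>r. r * (g r)\<^sup>2) absolutely_integrable_on K" "integral K (\<lambda>r. r * (g r)\<^sup>2) \<le> e"
      using energy_part[OF E e0 Ksub[unfolded Kint] m[unfolded Kint] b[unfolded Kint]] unfolding Kint by auto
  qed
  have uE: "(\<lambda>r. r * (u r * (1/r))\<^sup>2) absolutely_integrable_on K" "integral K (\<lambda>r. r * (u r * (1/r))\<^sup>2) \<le> e"
  proof -
    have m: "(\<lambda>r. r * (u r * (1/r))\<^sup>2) \<in> borel_measurable (lebesgue_on K)"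
      by (intro borel_measurable_times borel_measurable_power idm um invm)
    have b: "\<And>x. x \<in> K \<Longrightarrow> 0 \<le> x * (u x * (1/x))\<^sup>2 \<and> x * (u x * (1/x))\<^sup>2 \<le> Fh h u du dw ddw x"
    proof -
      fix x assume "x \<in> K" then have x: "x > 0" using K0 by auto
      have "x * (u x * (1/x))\<^sup>2 = (u x)\<^sup>2 / x" using x by (simp add: power2_eq_square field_simps)
      then show "0 \<le> x * (u x * (1/x))\<^sup>2 \<and> x * (u x * (1/x))\<^sup>2 \<le> Fh h u du dw ddw x"
        using Fh_ge(3)[OF x] x by auto
    qed
    show "(\<lambda>r. r * (u r * (1/r))\<^sup>2) absolutely_integrable_on K" "integral K (\<lambda>r. r * (u r * (1/r))\<^sup>2) \<le> e"
      using energy_part[OF E e0 Ksub[unfolded Kint] m[unfolded Kint] b[unfolded Kint]] unfolding Kint by auto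
  qed
  have cr: "continuous_on K (\<lambda>r. r)" by (rule continuous_on_id)
  have S8: "\<bar>integral K (\<lambda>r. g r * \<phi> r)\<bar> \<le> lam / 2 * e + 1 / (2 * lam) * Lk"
  proof -
    have ia: "(\<lambda>r. \<bar>g r\<bar>) integrable_on K"
      using set_lebesgue_integral_eq_integral(1)[OF set_integrable_abs[OF gK]] .
    have "norm (integral K (\<lambda>r. g r * \<phi> r)) \<le> integral K (\<lambda>r. \<bar>g r\<bar>)"
    proof (rule integral_norm_bound_integral[OF ig ia])
      fix x assume "x \<in> K"
      show "norm (g x * \<phi> x) \<le> \<bar>g x\<bar>"
        using phi_nonneg[OF pq(1-3), of x] phi_le1[OF pq(1-3), of x]
        by (simp add: abs_mult \<phi>_def mult_left_le)
    qed
    then have "\<bar>integral K (\<lambda>r. g r * \<phi> r)\<bar> \<le> integral K (\<lambda>r. \<bar>g r\<bar>)" by simp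
    also have "\<dots> \<le> lam / 2 * integral K (\<lambda>r. r * (g r)\<^sup>2) + 1 / (2 * lam) * integral K (\<lambda>r. 1 / r)"
      unfolding Kint by (rule amgm_int) (use gK gE(1) K0 lam in \<open>auto simp: Kint intro!: continuous_on_id\<close>)
    also have "\<dots> \<le> lam / 2 * e + 1 / (2 * lam) * Lk"
      using gE(2) lam Lk by (simp add: mult_left_mono)
    finally show ?thesis .
  qed
  have S9: "\<bar>integral K (\<lambda>r. u r * d\<phi> r)\<bar> \<le> 2 * KS * (lam / 2 * e + 1 / (2 * lam) * Lk)"
  proof -
    have uiK: "(\<lambda>r. u r * (1/r)) absolutely_integrable_on K"
      unfolding Kint by (rule abs_int_prod_cont) (use uK K0 a in \<open>auto simp: Kint intro!: continuous_intros\<close>)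
    have ia: "(\<lambda>r. 2 * KS * \<bar>u r * (1/r)\<bar>) integrable_on K"
      using set_lebesgue_integral_eq_integral(1)[OF set_integrable_abs[OF uiK]] by (rule integrable_on_mult_right)
    have iud: "(\<lambda>r. u r * d\<phi> r) integrable_on K"
      using set_lebesgue_integral_eq_integral(1)[OF W(1)] unfolding Kint d\<phi>_def .
    have "norm (integral K (\<lambda>r. u r * d\<phi> r)) \<le> integral K (\<lambda>r. 2 * KS * \<bar>u r * (1/r)\<bar>)"
    proof (rule integral_norm_bound_integral[OF iud ia])
      fix x assume x: "x \<in> K"
      have "\<bar>d\<phi> x\<bar> \<le> 2 * KS / x" unfolding d\<phi>_def by (rule dphi_bound) (use hh a x in \<open>auto simp: K_def\<close>)
      then have "\<bar>u x\<bar> * \<bar>d\<phi> x\<bar> \<le> \<bar>u x\<bar> * (2 * KS / x)" by (rule mult_left_mono) auto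
      also have "\<dots> = 2 * KS * \<bar>u x * (1/x)\<bar>" using K0[OF x] by (simp add: abs_mult)
      finally show "norm (u x * d\<phi> x) \<le> 2 * KS * \<bar>u x * (1/x)\<bar>" by (simp add: abs_mult)
    qed
    then have "\<bar>integral K (\<lambda>r. u r * d\<phi> r)\<bar> \<le> integral K (\<lambda>r. 2 * KS * \<bar>u r * (1/r)\<bar>)" by simp
    also have "\<dots> = 2 * KS * integral K (\<lambda>r. \<bar>u r * (1/r)\<bar>)" by (simp only: integral_mult_right)
    also have "integral K (\<lambda>r. \<bar>u r * (1/r)\<bar>) \<le> lam / 2 * integral K (\<lambda>r. r * (u r * (1/r))\<^sup>2) + 1 / (2 * lam) * integral K (\<lambda>r. 1 / r)"
      unfolding Kint by (rule amgm_int) (use uiK uE(1) K0 lam in \<open>auto simp: Kint intro!: continuous_on_id\<close>)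
    also have "\<dots> \<le> lam / 2 * e + 1 / (2 * lam) * Lk"
      using uE(2) lam Lk by (simp add: mult_left_mono)
    finally show ?thesis using KS(1) by (simp add: mult_left_mono)
  qed
  have "integral {h..a} (\<lambda>r. (dw r)\<^sup>2) \<le> 2 * a + (1 + 2 * KS) * (lam / 2 * e + 1 / (2 * lam) * Lk)"
  proof -
    define X where "X = lam / 2 * e + 1 / (2 * lam) * Lk"
    have s8: "\<bar>integral K (\<lambda>r. g r * \<phi> r)\<bar> \<le> X" using S8 unfolding X_def .
    have s9: "\<bar>integral K (\<lambda>r. u r * d\<phi> r)\<bar> \<le> 2 * KS * X" using S9 unfolding X_def .
    have ex: "(1 + 2 * KS) * X = X + 2 * KS * X" by (simp add: algebra_simps)
    show ?thesis unfolding X_def[symmetric] ex using S6 S7 s8 s9 main_id unfolding abs_le_iff by linarith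
  qed
  then show ?thesis by (simp add: a_def Lk_def)
qed

lemma main_bound:
  "min (1 / (\<delta>\<^sup>2 * ln (1 / h))) 1 \<le> max 512 (64 * (1 + 2 * KS)\<^sup>2 / 49) * e"
proof -
  define a where "a = \<delta>/8"
  have a: "0 < a" "a \<le> 1/8" "a < 1" using dl by (auto simp: a_def)
  have wa: "w a \<ge> 7/16" unfolding a_def by (rule wa_bound[OF dl wc w1 vc wpw bnd])
  obtain dd where dd: "dd > 0" "\<And>x. x \<in> {0..1} \<Longrightarrow> dist x 0 < dd \<Longrightarrow> dist (w x) (w 0) < 1/32"
    using wc unfolding continuous_on_iff by (metis atLeastAtMost_iff order_refl zero_le_one divide_pos_pos zero_less_numeral zero_less_one)
  define s where "s = min (dd/2) (min h a / 2)"
  have s: "0 < s" "s < h" "s < a" "s \<le> dd/2" using dd hh a by (auto simp: s_def min_def)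
  have ws: "w s \<le> 1/32" using dd(2)[of s] s a w0 by (auto simp: dist_real_def abs_less_iff)
  have ftc: "w a - w s = integral {s..a} dw" by (rule weak_ftc[OF wc vc wpw]) (use s a in auto)
  have I: "integral {s..a} dw \<ge> 13/32" using ftc wa ws by linarith
  have B: "1 + 2 * KS > 0" using KS(1) by simp
  have m1: "min (1 / (\<delta>\<^sup>2 * ln (1 / h))) 1 \<le> 1" by simp
  show ?thesis
  proof (cases "e \<ge> 1/512")
    case True
    then have "1 \<le> 512 * e" by simp
    also have "512 * e \<le> max 512 (64 * (1 + 2 * KS)\<^sup>2 / 49) * e" using e0 by (intro mult_right_mono) auto
    finally show ?thesis using m1 by linarith
  next
    case False
    then have esm: "e < 1/512" by simp
    have absle: "integral {s..b} dw \<le> integral {s..b} (\<lambda>r. \<bar>dw r\<bar>)" if "s \<le> b" "b < 1" for b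
      by (rule integral_le) (use vc_sub[of s b] that s in \<open>auto intro!: integrable_continuous_real continuous_intros\<close>)
    have hlt: "h < a"
    proof (rule ccontr)
      assume "\<not> h < a"
      then have ha: "a \<le> h" by simp
      have "integral {s..a} dw \<le> 8 * a\<^sup>2 * e / h\<^sup>2 + 1/64"
        using absle[of a] I1_bound[of s a] s a by linarith
      also have "8 * a\<^sup>2 * e / h\<^sup>2 \<le> 8 * e"
      proof -
        have "a\<^sup>2 \<le> h\<^sup>2" using ha a by (simp add: power_mono)
        then have "a\<^sup>2 / h\<^sup>2 \<le> 1" using hh by (simp add: divide_le_eq)
        then have "8 * e * (a\<^sup>2 / h\<^sup>2) \<le> 8 * e * 1" using e0 by (intro mult_left_mono) auto
        then show ?thesis by (simp add: field_simps)
      qed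
      finally show False using I esm by linarith
    qed
    have I1: "integral {s..h} (\<lambda>r. \<bar>dw r\<bar>) \<le> 8 * e + 1/64"
      using I1_bound[of s h] s hh by simp
    have int_sa: "dw integrable_on {s..a}"
      by (rule integrable_continuous_real, rule vc_sub) (use s a in auto)
    have comb: "integral {s..h} dw + integral {h..a} dw = integral {s..a} dw"
      by (rule Henstock_Kurzweil_Integration.integral_combine[OF _ _ int_sa]) (use s hlt in auto)
    have I2: "integral {h..a} dw \<ge> 3/8"
      using comb absle[of h] I1 I esm s hh by linarith
    define I2v where "I2v = integral {h..a} dw"
    define \<mu> where "\<mu> = I2v / (a - h)"
    have cha: "continuous_on {h..a} dw" by (rule vc_sub) (use hh a in auto)
    have S4: "integral {h..a} (\<lambda>r. (dw r)\<^sup>2) \<ge> I2v\<^sup>2 / (a - h)"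
    proof -
      have "integral {h..a} (\<lambda>r. 2 * \<mu> * dw r - \<mu>\<^sup>2) \<le> integral {h..a} (\<lambda>r. (dw r)\<^sup>2)"
      proof (rule integral_le)
        show "(\<lambda>r. 2 * \<mu> * dw r - \<mu>\<^sup>2) integrable_on {h..a}"
          by (intro integrable_continuous_real continuous_intros cha)
        show "(\<lambda>r. (dw r)\<^sup>2) integrable_on {h..a}"
          by (intro integrable_continuous_real continuous_intros cha)
        fix x
        have "0 \<le> (dw x - \<mu>)\<^sup>2" by simp
        then show "2 * \<mu> * dw x - \<mu>\<^sup>2 \<le> (dw x)\<^sup>2" by (simp add: power2_eq_square algebra_simps)
      qed
      also have "integral {h..a} (\<lambda>r. 2 * \<mu> * dw r - \<mu>\<^sup>2) = 2 * \<mu> * I2v - \<mu>\<^sup>2 * (a - h)"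
      proof -
        have i1: "(\<lambda>r. 2 * \<mu> * dw r) integrable_on {h..a}"
          by (intro integrable_continuous_real continuous_intros cha)
        have "integral {h..a} (\<lambda>r. 2 * \<mu> * dw r - \<mu>\<^sup>2) = integral {h..a} (\<lambda>r. 2 * \<mu> * dw r) - integral {h..a} (\<lambda>r. \<mu>\<^sup>2)"
          by (rule integral_diff[OF i1]) (rule integrable_const_ivl)
        also have "\<dots> = 2 * \<mu> * I2v - \<mu>\<^sup>2 * (a - h)" using hlt by (simp add: I2v_def)
        finally show ?thesis .
      qed
      also have "2 * \<mu> * I2v - \<mu>\<^sup>2 * (a - h) = I2v\<^sup>2 / (a - h)"
      proof -
        have d: "a - h \<noteq> 0" using hlt by simp
        have m: "\<mu> * (a - h) = I2v" using d by (simp add: \<mu>_def)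
        have "2 * \<mu> * I2v - \<mu>\<^sup>2 * (a - h) = 2 * \<mu> * I2v - \<mu> * (\<mu> * (a - h))"
          by (simp add: power2_eq_square)
        also have "\<dots> = \<mu> * I2v" unfolding m by simp
        also have "\<dots> = I2v\<^sup>2 / (a - h)" by (simp add: \<mu>_def power2_eq_square)
        finally show ?thesis .
      qed
      finally show ?thesis .
    qed
    have S4': "integral {h..a} (\<lambda>r. (dw r)\<^sup>2) \<ge> (9/64) / a"
    proof -
      have "(3/8)\<^sup>2 \<le> I2v\<^sup>2" using I2 by (simp add: I2v_def power_mono)
      then have "(3/8)\<^sup>2 / a \<le> I2v\<^sup>2 / a" using a by (intro divide_right_mono) auto
      then have "(9/64) / a \<le> I2v\<^sup>2 / a" by (simp add: power2_eq_square)
      also have "\<dots> \<le> I2v\<^sup>2 / (a - h)" using hlt hh by (intro divide_left_mono) auto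
      finally show ?thesis using S4 by linarith
    qed
    define Lk where "Lk = ln (a + a) - ln (h/2)"
    have Lk0: "Lk > 0" using hlt hh a by (simp add: Lk_def)
    have LkL: "Lk \<le> ln (1 / h)"
    proof -
      have "ln (a + a) \<le> ln (1/2)" using a by (subst ln_le_cancel_iff) auto
      moreover have "ln (1 / h) + ln (h / 2) = ln (1/2)"
      proof -
        have "ln (1 / h) + ln (h / 2) = ln ((1 / h) * (h / 2))" using hh by (intro ln_mult_pos[symmetric]) auto
        also have "(1 / h) * (h / 2) = 1/2" using hh by simp
        finally show ?thesis .
      qed
      ultimately show ?thesis by (simp add: Lk_def)
    qed
    define Bc where "Bc = 1 + 2 * KS"
    define lam where "lam = 64 * a * Bc * Lk / 7"
    have Bp: "Bc > 0" using B by (simp add: Bc_def)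
    have lam: "lam > 0" using a Bp Lk0 by (simp add: lam_def)
    have EM: "integral {h..a} (\<lambda>r. (dw r)\<^sup>2) \<le> 2 * a + Bc * (lam / 2 * e + Lk / (2 * lam))"
      using est_main[OF hlt[unfolded a_def] lam] unfolding a_def[symmetric] Lk_def[symmetric] Bc_def[symmetric] .
    have t1: "Bc * (Lk / (2 * lam)) = 7 / (128 * a)" using a Bp Lk0 by (simp add: lam_def field_simps)
    have t2: "2 * a \<le> (2/64) / a"
    proof -
      have "a * a \<le> (1/8) * (1/8)" using a by (intro mult_mono) auto
      then show ?thesis using a by (simp add: field_simps)
    qed
    have "(9/64) / a = (2/64) / a + 7 / (128 * a) + 7 / (128 * a)" using a by (simp add: field_simps)
    then have "7 / (128 * a) \<le> Bc * (lam / 2 * e)"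
      using S4' EM t1 t2 by (simp add: distrib_left)
    also have "Bc * (lam / 2 * e) = 32 * a * Bc\<^sup>2 * Lk * e / 7"
      by (simp add: lam_def power2_eq_square field_simps)
    finally have key: "7 / (128 * a) \<le> 32 * a * Bc\<^sup>2 * Lk * e / 7" .
    have key2: "49 \<le> 64 * \<delta>\<^sup>2 * Bc\<^sup>2 * Lk * e"
    proof -
      have "7 * 7 \<le> 7 * 128 * a * (32 * a * Bc\<^sup>2 * Lk * e / 7)"
        using key a by (simp add: field_simps)
      also have "\<dots> = 64 * \<delta>\<^sup>2 * Bc\<^sup>2 * Lk * e" by (simp add: a_def power2_eq_square field_simps)
      finally show ?thesis by simp
    qed
    have "1 / (\<delta>\<^sup>2 * ln (1 / h)) \<le> 1 / (\<delta>\<^sup>2 * Lk)"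
      using dl Lk0 LkL by (intro divide_left_mono mult_left_mono mult_pos_pos) auto
    also have "1 / (\<delta>\<^sup>2 * Lk) \<le> 64 * Bc\<^sup>2 / 49 * e"
      using key2 dl Lk0 by (simp add: field_simps)
    also have "\<dots> \<le> max 512 (64 * (1 + 2 * KS)\<^sup>2 / 49) * e"
      using e0 by (intro mult_right_mono) (auto simp: Bc_def)
    finally show ?thesis by linarith
  qed
qed

end

theorem lemma3p7:
  shows "\<exists>C>0. \<forall>(\<delta>::real) (h::real) u w du dw ddw.
     0 \<le> \<delta> \<and> \<delta> \<le> 1 \<and> 0 < h \<and> h \<le> 1/2 \<and> h \<le> \<delta>
     \<and> (u, w) \<in> A_adm \<delta>
     \<and> weak_partial {0<..<1} u 1 du
     \<and> weak_partial {0<..<1} w 1 dw \<and> continuous_on {0<..1} dw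
     \<and> weak_partial {0<..<1} dw 1 ddw
     \<and> (\<forall>r\<in>{\<delta>/8..1}. -3/2 < dw r \<and> dw r < -1/2)
     \<longrightarrow> ennreal (min (1 / (\<delta>\<^sup>2 * ln (1 / h))) 1) \<le> ennreal C * E_energy h u du dw ddw"
proof -
  define C where "C = max 512 (64 * (1 + 2 * KS)\<^sup>2 / 49)"
  have Cp: "C > 0" by (simp add: C_def)
  have main: "ennreal (min (1 / (\<delta>\<^sup>2 * ln (1 / h))) 1) \<le> ennreal C * E_energy h u du dw ddw"
   if A: "0 \<le> \<delta> \<and> \<delta> \<le> 1 \<and> 0 < h \<and> h \<le> 1/2 \<and> h \<le> \<delta>
     \<and> (u, w) \<in> A_adm \<delta>
     \<and> weak_partial {0<..<1} u 1 du
     \<and> weak_partial {0<..<1} w 1 dw \<and> continuous_on {0<..1} dw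
     \<and> weak_partial {0<..<1} dw 1 ddw
     \<and> (\<forall>r\<in>{\<delta>/8..1}. -3/2 < dw r \<and> dw r < -1/2)"
   for \<delta> h :: real and u w du dw ddw :: "real \<Rightarrow> real"
  proof -
    have dl: "0 < \<delta>" "\<delta> \<le> 1" and hh: "0 < h" "h \<le> 1/2" "h \<le> \<delta>" using A by auto
    have wc: "continuous_on {0..1} w" and w0: "w 0 = 0" and w1: "w 1 = 1 - \<delta>"
      using A by (auto simp: A_adm_def)
    have wpu: "weak_partial {0<..<1} u 1 du" and wpw: "weak_partial {0<..<1} w 1 dw"
      and vc: "continuous_on {0<..1} dw" using A by auto
    have bnd: "\<And>r. r \<in> {\<delta>/8..1} \<Longrightarrow> dw r < -1/2" using A by auto
    show ?thesis
    proof (cases "E_energy h u du dw ddw = \<infinity>")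
      case True
      have "ennreal C \<noteq> 0" using Cp by simp
      then show ?thesis using True by (simp add: ennreal_mult_top)
    next
      case False
      define e where "e = enn2real (E_energy h u du dw ddw)"
      have E: "E_energy h u du dw ddw = ennreal e" using False by (simp add: e_def less_top ennreal_enn2real)
      have e0: "e \<ge> 0" by (simp add: e_def)
      have mb: "min (1 / (\<delta>\<^sup>2 * ln (1 / h))) 1 \<le> C * e"
        unfolding C_def by (rule main_bound[OF dl hh wc w0 w1 wpu wpw vc bnd E e0])
      have "ennreal (min (1 / (\<delta>\<^sup>2 * ln (1 / h))) 1) \<le> ennreal (C * e)" by (rule ennreal_leI[OF mb])
      also have "\<dots> = ennreal C * E_energy h u du dw ddw" using Cp e0 E by (simp add: ennreal_mult)
      finally show ?thesis .
    qed
  qed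
  show ?thesis using main Cp by blast
qed


end
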